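(* Let $H\in(\tfrac12,1)$, $\beta\in(1-2H,1]$, and let $A$, $W^H$, $\Phi$ be as in the context. Then the stochastic convolution $\mathcal O_t:=\int_0^tE(t-s)\Phi\,\mathrm dW^H(s)$, $t\in[0,T]$, is well defined in $L^2(\Omega;V)$ and there is a constant $c_H$ depending only on $H$ (and, for the second estimate, on $A$ only through the stated semigroup properties) such that $$\|\mathcal O_t\|_{L^2(\Omega;V_{2H+\beta-1})}\le c_H\|A^{\frac{\beta-1}{2}}\Phi\|_{\mathcal L_2}\quad\forall t\in[0,T],$$ and for all $0\le s<t\le T$ and all $\delta\in[0,2H+\beta-1]$, $$\|\mathcal O_t-\mathcal O_s\|_{L^2(\Omega;V_\delta)}\le c_H\|A^{\frac{\beta-1}{2}}\Phi\|_{\mathcal L_2}(t-s)^{\frac{2H+\beta-1-\delta}{2}} .$$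
   Context: $(V,\langle\cdot,\cdot\rangle,\|\cdot\|)$ is a real separable Hilbert space; $\mathcal L_2$ denotes the Hilbert–Schmidt operators on $V$. $A$ is a linear, densely defined, positive self-adjoint unbounded operator on $V$ with compact inverse, eigenpairs $(\lambda_i,e_i)$ with $0<\lambda_1\le\lambda_2\le\dots\to\infty$, semigroup $E(t)=e^{-tA}$, and $V_\gamma=\mathrm{dom}(A^{\gamma/2})$ with norm $\|A^{\gamma/2}\cdot\|$. $W^H(t)=\sum_n w_n^H(t)e_n$ is a cylindrical fBm with independent scalar standard fBms $w_n^H$ of Hurst index $H\in(\tfrac12,1)$. $\Phi$ is a deterministic linear operator on $V$ with $\|A^{\frac{\beta-1}{2}}\Phi\|_{\mathcal L_2}<\infty$. With $\phi(y)=H(2H-1)|y|^{2H-2}$, the stochastic integral against $W^H$ of a deterministic operator-valued integrand $\Psi$ is defined as $\sum_n\int\Psi(s)e_n\,\mathrm dw^H_n(s)$ and satisfies $\mathbb E\|\int_0^T\Psi\,\mathrm dW^H\|^2=\int_0^T\int_0^T\langle\Psi(u),\Psi(v)\rangle_{\mathcal L_2}\phi(u-v)\,\mathrm du\,\mathrm dv$. *)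

theory Defs
  imports "HOL-Analysis.Analysis"
begin

text \<open>The operator A is given through its orthonormal eigenbasis
  e and eigenvalues lam (A e_i = lam_i e_i).\<close>

definition orthonormal_basis :: "(nat \<Rightarrow> 'a::real_inner) \<Rightarrow> bool" where
  "orthonormal_basis e \<longleftrightarrow>
     (\<forall>i j. e i \<bullet> e j = (if i = j then 1 else 0)) \<and>
     (\<forall>x. (\<forall>i. x \<bullet> e i = 0) \<longrightarrow> x = 0)"

text \<open>Spectral data of a positive self-adjoint operator with compact inverse:
  0 < lam_1 <= lam_2 <= ... tending to infinity.\<close>
definition admissible_spectrum :: "(nat \<Rightarrow> real) \<Rightarrow> bool" where
  "admissible_spectrum lam \<longleftrightarrow> 0 < lam 0 \<and> mono lam \<and> filterlim lam at_top sequentially"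

text \<open>A^a x = sum_i lam_i^a <x,e_i> e_i (used for a <= 0, where it is bounded).\<close>
definition frac_pow :: "(nat \<Rightarrow> 'a::real_inner) \<Rightarrow> (nat \<Rightarrow> real) \<Rightarrow> real \<Rightarrow> 'a \<Rightarrow> 'a" where
  "frac_pow e lam a x = (\<Sum>i. (lam i powr a * (x \<bullet> e i)) *\<^sub>R e i)"

definition sgrp :: "(nat \<Rightarrow> 'a::real_inner) \<Rightarrow> (nat \<Rightarrow> real) \<Rightarrow> real \<Rightarrow> 'a \<Rightarrow> 'a" where
  "sgrp e lam t x = (\<Sum>i. (exp (- (t * lam i)) * (x \<bullet> e i)) *\<^sub>R e i)"

definition hs_norm2 :: "(nat \<Rightarrow> 'a::real_inner) \<Rightarrow> ('a \<Rightarrow> 'a) \<Rightarrow> ennreal" where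
  "hs_norm2 e K = (\<Sum>n. ennreal ((norm (K (e n)))\<^sup>2))"

definition fbm_kernel :: "real \<Rightarrow> real \<Rightarrow> real" where
  "fbm_kernel H y = H * (2 * H - 1) * \<bar>y\<bar> powr (2 * H - 2)"

text \<open>Second moment of the scalar Wiener integral of a deterministic f against a
  standard fBm w^H over [a,b]:  E|int_a^b f dw^H|^2 = int int f(u) f(v) phi(u-v) du dv.\<close>
definition wiener_integrable :: "real \<Rightarrow> (real \<Rightarrow> real) \<Rightarrow> real \<Rightarrow> real \<Rightarrow> bool" where
  "wiener_integrable H f a b \<longleftrightarrow>
     set_integrable lborel ({a..b} \<times> {a..b})
       (\<lambda>z::real\<times>real. f (fst z) * f (snd z) * fbm_kernel H (fst z - snd z))"

definition wiener_moment2 :: "real \<Rightarrow> (real \<Rightarrow> real) \<Rightarrow> real \<Rightarrow> real \<Rightarrow> real" where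
  "wiener_moment2 H f a b =
     (LINT z:({a..b} \<times> {a..b})|lborel. f (fst z) * f (snd z) * fbm_kernel H (fst z - snd z))"

text \<open>E || int_a^b Psi dW^H ||^2_{V_gamma} for a deterministic operator-valued integrand Psi,
  where W^H = sum_n w_n^H e_n is the cylindrical fBm with independent scalar fBms w_n^H:
  sum over n (noise directions) and i (coordinates in V) of
  lam_i^gamma * E|int <Psi(r) e_n, e_i> dw_n^H(r)|^2.\<close>
definition stoch_moment2 ::
  "real \<Rightarrow> (nat \<Rightarrow> 'a::real_inner) \<Rightarrow> (nat \<Rightarrow> real) \<Rightarrow> real \<Rightarrow> (real \<Rightarrow> 'a \<Rightarrow> 'a) \<Rightarrow> real \<Rightarrow> real \<Rightarrow> ennreal" where
  "stoch_moment2 H e lam \<gamma> \<Psi> a b =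
     (\<Sum>n. \<Sum>i. ennreal (lam i powr \<gamma> * wiener_moment2 H (\<lambda>r. \<Psi> r (e n) \<bullet> e i) a b))"

text \<open>The stochastic integral int_a^b Psi dW^H is well defined in L^2(Omega;V):
  every scalar Wiener integral is well defined and the V-valued series converges in L^2.\<close>
definition stoch_well_defined ::
  "real \<Rightarrow> (nat \<Rightarrow> 'a::real_inner) \<Rightarrow> (nat \<Rightarrow> real) \<Rightarrow> (real \<Rightarrow> 'a \<Rightarrow> 'a) \<Rightarrow> real \<Rightarrow> real \<Rightarrow> bool" where
  "stoch_well_defined H e lam \<Psi> a b \<longleftrightarrow>
     (\<forall>n i. wiener_integrable H (\<lambda>r. \<Psi> r (e n) \<bullet> e i) a b) \<and>
     stoch_moment2 H e lam 0 \<Psi> a b < \<infinity>"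

text \<open>Integrand of O_t = int_0^t E(t-r) Phi dW^H(r).\<close>
definition conv_integrand :: "(nat \<Rightarrow> 'a::real_inner) \<Rightarrow> (nat \<Rightarrow> real) \<Rightarrow> ('a \<Rightarrow> 'a) \<Rightarrow> real \<Rightarrow> real \<Rightarrow> 'a \<Rightarrow> 'a" where
  "conv_integrand e lam \<Phi> t r x = sgrp e lam (t - r) (\<Phi> x)"

text \<open>Integrand on [0,t] of O_t - O_s (s < t): E(t-r)Phi - 1_{r <= s} E(s-r)Phi.\<close>
definition conv_diff_integrand :: "(nat \<Rightarrow> 'a::real_inner) \<Rightarrow> (nat \<Rightarrow> real) \<Rightarrow> ('a \<Rightarrow> 'a) \<Rightarrow> real \<Rightarrow> real \<Rightarrow> real \<Rightarrow> 'a \<Rightarrow> 'a" where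
  "conv_diff_integrand e lam \<Phi> s t r x =
     sgrp e lam (t - r) (\<Phi> x) - (if r \<le> s then sgrp e lam (s - r) (\<Phi> x) else 0)"

end

theory Submission
  imports Defs
begin


lemma on_inner: "orthonormal_basis e \<Longrightarrow> e i \<bullet> e j = (if i = j then 1 else 0)"
  unfolding orthonormal_basis_def by blast

lemma on_sum_inner:
  assumes "orthonormal_basis e" "finite A"
  shows "(\<Sum>i\<in>A. c i *\<^sub>R e i) \<bullet> e j = (if j \<in> A then c j else 0)"
  using assms(2)
  by (simp add: inner_sum_left on_inner[OF assms(1)] if_distrib[of "\<lambda>x. c _ * x"] sum.delta' cong: if_cong)

lemma on_sum_norm2:
  assumes "orthonormal_basis e" "finite A"
  shows "(norm (\<Sum>i\<in>A. c i *\<^sub>R e i))\<^sup>2 = (\<Sum>i\<in>A. (c i)\<^sup>2)"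
proof -
  have "(norm (\<Sum>i\<in>A. c i *\<^sub>R e i))\<^sup>2 = (\<Sum>i\<in>A. c i *\<^sub>R e i) \<bullet> (\<Sum>j\<in>A. c j *\<^sub>R e j)"
    by (simp add: power2_norm_eq_inner)
  also have "\<dots> = (\<Sum>j\<in>A. c j * ((\<Sum>i\<in>A. c i *\<^sub>R e i) \<bullet> e j))"
    by (simp add: inner_sum_right)
  also have "\<dots> = (\<Sum>j\<in>A. (c j)\<^sup>2)"
    by (rule sum.cong) (auto simp: on_sum_inner[OF assms] power2_eq_square)
  finally show ?thesis .
qed

lemma bessel_finite:
  assumes "orthonormal_basis e"
  shows "(\<Sum>i<N. (x \<bullet> e i)\<^sup>2) \<le> (norm x)\<^sup>2"
proof -
  define p where "p = (\<Sum>i<N. (x \<bullet> e i) *\<^sub>R e i)"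
  have px: "p \<bullet> x = (\<Sum>i<N. (x \<bullet> e i)\<^sup>2)"
    unfolding p_def inner_sum_left by (rule sum.cong) (simp_all add: power2_eq_square inner_commute)
  have pp: "p \<bullet> p = (\<Sum>i<N. (x \<bullet> e i)\<^sup>2)"
    using on_sum_norm2[OF assms, of "{..<N}" "\<lambda>i. x \<bullet> e i"] unfolding p_def
    by (simp add: power2_norm_eq_inner)
  have "0 \<le> (x - p) \<bullet> (x - p)" by simp
  also have "\<dots> = x \<bullet> x - 2 * (p \<bullet> x) + p \<bullet> p"
    by (simp add: inner_diff_left inner_diff_right inner_commute)
  finally show ?thesis using px pp by (simp add: power2_norm_eq_inner)
qed

lemma bessel_summable:
  assumes "orthonormal_basis e"
  shows "summable (\<lambda>i. (x \<bullet> e i)\<^sup>2)"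
  by (rule summableI_nonneg_bounded[where x="(norm x)\<^sup>2"]) (auto simp: bessel_finite[OF assms])

lemma on_series:
  fixes e :: "nat \<Rightarrow> 'a::{real_inner,complete_space}"
  assumes "orthonormal_basis e" "summable (\<lambda>i. (c i)\<^sup>2)"
  shows "summable (\<lambda>i. c i *\<^sub>R e i)"
    and "(\<Sum>i. c i *\<^sub>R e i) \<bullet> e j = c j"
    and "(norm (\<Sum>i. c i *\<^sub>R e i))\<^sup>2 = (\<Sum>i. (c i)\<^sup>2)"
proof -
  have cs: "\<And>m n. m \<le> n \<Longrightarrow> (norm ((\<Sum>i<n. c i *\<^sub>R e i) - (\<Sum>i<m. c i *\<^sub>R e i)))\<^sup>2 = (\<Sum>i<n. (c i)\<^sup>2) - (\<Sum>i<m. (c i)\<^sup>2)"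
  proof -
    fix m n :: nat assume "m \<le> n"
    hence eq: "\<And>g :: nat \<Rightarrow> 'a. (\<Sum>i<n. g i) - (\<Sum>i<m. g i) = (\<Sum>i=m..<n. g i)"
      and eqr: "\<And>g :: nat \<Rightarrow> real. (\<Sum>i<n. g i) - (\<Sum>i<m. g i) = (\<Sum>i=m..<n. g i)"
      by (metis add_diff_cancel_left' atLeast0LessThan sum.atLeastLessThan_concat zero_le)+
    show "?thesis m n" unfolding eq eqr by (rule on_sum_norm2[OF assms(1)]) simp
  qed
  have "Cauchy (\<lambda>n. \<Sum>i<n. c i *\<^sub>R e i)"
  proof (rule metric_CauchyI)
    fix r :: real assume r: "r > 0"
    have "Cauchy (\<lambda>n. \<Sum>i<n. (c i)\<^sup>2)"
      using assms(2) by (simp add: Cauchy_convergent_iff summable_iff_convergent)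
    from metric_CauchyD[OF this, of "r\<^sup>2"] r
    obtain M where M: "\<And>m n. m \<ge> M \<Longrightarrow> n \<ge> M \<Longrightarrow> dist (\<Sum>i<m. (c i)\<^sup>2) (\<Sum>i<n. (c i)\<^sup>2) < r\<^sup>2"
      by auto
    have key: "dist (\<Sum>i<m. c i *\<^sub>R e i) (\<Sum>i<n. c i *\<^sub>R e i) < r" if "m \<ge> M" "n \<ge> M" "m \<le> n" for m n
    proof -
      have "(dist (\<Sum>i<m. c i *\<^sub>R e i) (\<Sum>i<n. c i *\<^sub>R e i))\<^sup>2 = (\<Sum>i<n. (c i)\<^sup>2) - (\<Sum>i<m. (c i)\<^sup>2)"
        using cs[OF that(3)] by (simp add: dist_norm norm_minus_commute)
      also have "\<dots> < r\<^sup>2" using M[OF that(1,2)] by (simp add: dist_real_def)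
      finally show ?thesis using r by (meson abs_le_square_iff abs_norm_cancel less_le_not_le not_le_imp_less power2_less_imp_less zero_le_dist)
    qed
    show "\<exists>M. \<forall>m\<ge>M. \<forall>n\<ge>M. dist (\<Sum>i<m. c i *\<^sub>R e i) (\<Sum>i<n. c i *\<^sub>R e i) < r"
      by (metis key dist_commute nat_le_linear)
  qed
  then show sm: "summable (\<lambda>i. c i *\<^sub>R e i)"
    by (simp add: Cauchy_convergent summable_iff_convergent)
  have lim: "(\<lambda>N. \<Sum>i<N. c i *\<^sub>R e i) \<longlonglongrightarrow> (\<Sum>i. c i *\<^sub>R e i)"
    using sm summable_LIMSEQ by blast
  have "(\<lambda>N. (\<Sum>i<N. c i *\<^sub>R e i) \<bullet> e j) \<longlonglongrightarrow> (\<Sum>i. c i *\<^sub>R e i) \<bullet> e j"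
    by (intro tendsto_intros lim)
  moreover have "(\<lambda>N. (\<Sum>i<N. c i *\<^sub>R e i) \<bullet> e j) \<longlonglongrightarrow> c j"
  proof (rule tendsto_eventually)
    show "\<forall>\<^sub>F N in sequentially. (\<Sum>i<N. c i *\<^sub>R e i) \<bullet> e j = c j"
      using eventually_gt_at_top[of j]
      by eventually_elim (simp add: on_sum_inner[OF assms(1)])
  qed
  ultimately show "(\<Sum>i. c i *\<^sub>R e i) \<bullet> e j = c j" using LIMSEQ_unique by blast
  have "(\<lambda>N. (norm (\<Sum>i<N. c i *\<^sub>R e i))\<^sup>2) \<longlonglongrightarrow> (norm (\<Sum>i. c i *\<^sub>R e i))\<^sup>2"
    by (intro tendsto_intros lim)
  moreover have "(\<lambda>N. (norm (\<Sum>i<N. c i *\<^sub>R e i))\<^sup>2) \<longlonglongrightarrow> (\<Sum>i. (c i)\<^sup>2)"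
    using summable_LIMSEQ[OF assms(2)] by (simp add: on_sum_norm2[OF assms(1)])
  ultimately show "(norm (\<Sum>i. c i *\<^sub>R e i))\<^sup>2 = (\<Sum>i. (c i)\<^sup>2)" using LIMSEQ_unique by blast
qed

lemma on_series_bounded:
  fixes e :: "nat \<Rightarrow> 'a::{real_inner,complete_space}"
  assumes "orthonormal_basis e" "\<And>i. \<bar>d i\<bar> \<le> B"
  shows "summable (\<lambda>i. (d i * (x \<bullet> e i))\<^sup>2)"
proof (rule summable_comparison_test[OF _ summable_mult[OF bessel_summable[OF assms(1)], of "B\<^sup>2" x]])
  show "\<exists>N. \<forall>n\<ge>N. norm ((d n * (x \<bullet> e n))\<^sup>2) \<le> B\<^sup>2 * (x \<bullet> e n)\<^sup>2"
  proof (intro exI allI impI)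
    fix n :: nat
    have "(d n)\<^sup>2 \<le> B\<^sup>2" using assms(2)[of n] by (metis abs_le_square_iff abs_of_nonneg abs_ge_zero order_trans)
    then show "norm ((d n * (x \<bullet> e n))\<^sup>2) \<le> B\<^sup>2 * (x \<bullet> e n)\<^sup>2"
      by (simp add: power_mult_distrib mult_right_mono)
  qed
qed



lemma L_inner:
  assumes a: "-1 < (\<alpha>::real)" and ep: "\<epsilon> > 0"
  shows "(\<integral>\<^sup>+v. ennreal (\<bar>u - v\<bar> powr \<alpha> * indicator {u-\<epsilon>..u+\<epsilon>} v) \<partial>lborel)
         = ennreal (2 * (\<epsilon> powr (\<alpha>+1) / (\<alpha>+1)))"
proof -
  define I where "I = \<epsilon> powr (\<alpha>+1) / (\<alpha>+1)"
  have h0: "((\<lambda>x. x powr \<alpha>) has_integral I) {0..\<epsilon>}"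
    unfolding I_def using has_integral_powr_from_0[OF a] ep by simp
  have h1: "((\<lambda>x. \<bar>x\<bar> powr \<alpha>) has_integral I) {0..\<epsilon>}"
    by (rule has_integral_eq[OF _ h0]) simp
  have "((\<lambda>x. \<bar>-x\<bar> powr \<alpha>) has_integral I) {-\<epsilon>..-0}"
    using has_integral_reflect_real[where f="\<lambda>x. \<bar>x\<bar> powr \<alpha>", THEN iffD2, OF h1] by simp
  then have h2: "((\<lambda>x. \<bar>x\<bar> powr \<alpha>) has_integral I) {-\<epsilon>..0}" by simp
  have h3: "((\<lambda>x. \<bar>x\<bar> powr \<alpha>) has_integral (I + I)) {-\<epsilon>..\<epsilon>}"
    by (rule has_integral_combine[OF _ _ h2 h1]) (use ep in auto)
  have h4: "(\<integral>\<^sup>+x. ennreal (\<bar>x\<bar> powr \<alpha>) * indicator {-\<epsilon>..\<epsilon>} x \<partial>lborel) = ennreal (I + I)"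
    by (rule nn_integral_has_integral_lebesgue'[OF _ h3]) simp
  have "(\<integral>\<^sup>+v. ennreal (\<bar>u - v\<bar> powr \<alpha> * indicator {u-\<epsilon>..u+\<epsilon>} v) \<partial>lborel)
      = (\<integral>\<^sup>+x. ennreal (\<bar>u - (u + 1 * x)\<bar> powr \<alpha> * indicator {u-\<epsilon>..u+\<epsilon>} (u + 1 * x)) \<partial>lborel)"
    using nn_integral_real_affine[of "\<lambda>v. ennreal (\<bar>u - v\<bar> powr \<alpha> * indicator {u-\<epsilon>..u+\<epsilon>} v)" 1 u]
    by simp
  also have "\<dots> = (\<integral>\<^sup>+x. ennreal (\<bar>x\<bar> powr \<alpha>) * indicator {-\<epsilon>..\<epsilon>} x \<partial>lborel)"
    by (intro nn_integral_cong) (auto simp: indicator_def)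
  finally show ?thesis using h4 unfolding I_def by simp
qed

lemma ennreal_arith1:
  assumes "0 \<le> x" "0 \<le> y" "0 \<le> z"
  shows "ennreal x * ennreal y + ennreal z * ennreal x * ennreal x = ennreal (x*y + z*x*x)"
  using assms by (simp add: ennreal_mult ennreal_plus)

lemma L_main:
  fixes F :: "real \<Rightarrow> real"
  assumes a: "-1 < \<alpha>" "\<alpha> \<le> 0" and Fm: "F \<in> borel_measurable borel"
    and F0: "\<And>x. 0 \<le> F x" and F1: "\<And>x. F x \<le> 1" and m: "m > 0" and K: "K \<ge> 0"
    and FI: "(\<integral>\<^sup>+x. F x \<partial>lborel) \<le> ennreal (K * m)"
  shows "(\<integral>\<^sup>+u. \<integral>\<^sup>+v. ennreal (F u * F v * \<bar>u - v\<bar> powr \<alpha>) \<partial>lborel \<partial>lborel)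
         \<le> ennreal ((2 * K / (\<alpha> + 1) + K\<^sup>2) * m powr (\<alpha> + 2))"
proof -
  define c1 where "c1 = 2 * (m powr (\<alpha>+1) / (\<alpha>+1))"
  define I where "I = (\<integral>\<^sup>+x. F x \<partial>lborel)"
  have [measurable]: "F \<in> borel_measurable lborel" using Fm by simp
  have pw: "ennreal (F u * F v * \<bar>u - v\<bar> powr \<alpha>)
      \<le> ennreal (F u) * ennreal (\<bar>u - v\<bar> powr \<alpha> * indicator {u-m..u+m} v)
         + ennreal (m powr \<alpha>) * ennreal (F u) * ennreal (F v)" for u v
  proof (cases "\<bar>u - v\<bar> \<le> m")
    case True
    then have "v \<in> {u-m..u+m}" by auto
    then have "ennreal (F u * F v * \<bar>u - v\<bar> powr \<alpha>) \<le> ennreal (F u) * ennreal (\<bar>u - v\<bar> powr \<alpha> * indicator {u-m..u+m} v)"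
      using F0[of u] F0[of v] F1[of v]
      by (simp add: ennreal_mult[symmetric] mult_right_mono mult_left_le)
    then show ?thesis by (rule order_trans) simp
  next
    case False
    then have "\<bar>u - v\<bar> powr \<alpha> \<le> m powr \<alpha>" using m a by (intro powr_mono2') auto
    then have "F u * F v * \<bar>u - v\<bar> powr \<alpha> \<le> F u * F v * m powr \<alpha>"
      using F0[of u] F0[of v] by (intro mult_left_mono) auto
    then have "F u * F v * \<bar>u - v\<bar> powr \<alpha> \<le> m powr \<alpha> * F u * F v"
      by (simp add: ac_simps)
    then have "ennreal (F u * F v * \<bar>u - v\<bar> powr \<alpha>) \<le> ennreal (m powr \<alpha>) * ennreal (F u) * ennreal (F v)"
      using F0[of u] F0[of v] by (simp add: ennreal_mult[symmetric] ennreal_leI)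
    then show ?thesis by (rule order_trans) simp
  qed
  have "(\<integral>\<^sup>+u. \<integral>\<^sup>+v. ennreal (F u * F v * \<bar>u - v\<bar> powr \<alpha>) \<partial>lborel \<partial>lborel)
      \<le> (\<integral>\<^sup>+u. \<integral>\<^sup>+v. ennreal (F u) * ennreal (\<bar>u - v\<bar> powr \<alpha> * indicator {u-m..u+m} v)
         + ennreal (m powr \<alpha>) * ennreal (F u) * ennreal (F v) \<partial>lborel \<partial>lborel)"
    by (intro nn_integral_mono pw)
  also have "\<dots> = (\<integral>\<^sup>+u. ennreal (F u) * ennreal c1 + ennreal (m powr \<alpha>) * ennreal (F u) * I \<partial>lborel)"
  proof (intro nn_integral_cong)
    fix u
    show "(\<integral>\<^sup>+v. ennreal (F u) * ennreal (\<bar>u - v\<bar> powr \<alpha> * indicator {u-m..u+m} v)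
         + ennreal (m powr \<alpha>) * ennreal (F u) * ennreal (F v) \<partial>lborel)
        = ennreal (F u) * ennreal c1 + ennreal (m powr \<alpha>) * ennreal (F u) * I"
      unfolding c1_def I_def
      by (subst nn_integral_add; (subst nn_integral_cmult)?; (subst nn_integral_cmult)?)
         (auto simp: L_inner[OF a(1) m])
  qed
  also have "\<dots> = I * ennreal c1 + ennreal (m powr \<alpha>) * I * I"
    unfolding I_def
    by (subst nn_integral_add; (subst nn_integral_multc)?; (subst nn_integral_cmult)?; (subst nn_integral_multc)?)
       (auto simp: mult.assoc)
  also have "\<dots> \<le> ennreal (K*m) * ennreal c1 + ennreal (m powr \<alpha>) * ennreal (K*m) * ennreal (K*m)"
    using FI unfolding I_def[symmetric] by (intro add_mono mult_mono) auto
  also have "\<dots> = ennreal (K*m*c1 + m powr \<alpha> * (K*m) * (K*m))"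
    using K m a by (intro ennreal_arith1) (auto simp: c1_def)
  also have "K*m*c1 + m powr \<alpha> * (K*m) * (K*m) = (2 * K / (\<alpha> + 1) + K\<^sup>2) * m powr (\<alpha> + 2)"
  proof -
    have e1: "m * m powr (\<alpha>+1) = m powr (\<alpha>+2)" proof -
      have "m powr (\<alpha>+2) = m powr (1 + (\<alpha>+1))" by (rule arg_cong[where f="\<lambda>x. m powr x"]) simp
      also have "\<dots> = m powr 1 * m powr (\<alpha>+1)" by (rule powr_add)
      finally show ?thesis using m by simp
    qed
    have e2: "m powr \<alpha> * (m * m) = m powr (\<alpha>+2)" using m by (simp add: powr_add powr_numeral power2_eq_square)
    show ?thesis unfolding c1_def using e1 e2 a
      by (simp add: field_simps power2_eq_square)
  qed
  finally show ?thesis .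
qed



lemma WM:
  fixes f g :: "real \<Rightarrow> real"
  assumes H: "1/2 < H" "H < 1"
    and fg: "\<And>r. r \<in> {0..t} \<Longrightarrow> f r = a * g r"
    and gm: "g \<in> borel_measurable borel"
    and g1: "\<And>r. r \<in> {0..t} \<Longrightarrow> \<bar>g r\<bar> \<le> 1"
    and m: "m > 0"
    and gi: "(\<integral>\<^sup>+r. ennreal (\<bar>g r\<bar> * indicator {0..t} r) \<partial>lborel) \<le> ennreal (2 * m)"
  shows "wiener_integrable H f 0 t"
    and "wiener_moment2 H f 0 t \<le> a\<^sup>2 * (H * (2*H - 1)) * (4 / (2*H - 1) + 4) * m powr (2*H)"
proof -
  define \<kappa> where "\<kappa> = H * (2*H - 1)"
  define \<alpha> where "\<alpha> = 2*H - 2"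
  define C where "C = (2 * 2 / (\<alpha> + 1) + 2\<^sup>2) * m powr (\<alpha> + 2)"
  define S where "S = {0..t} \<times> {0..t}"
  define G where "G = (\<lambda>z::real\<times>real. f (fst z) * f (snd z) * fbm_kernel H (fst z - snd z))"
  define F where "F = (\<lambda>r. \<bar>g r\<bar> * indicator {0..t} r)"
  define J where "J = (\<lambda>z::real\<times>real. a\<^sup>2 * \<kappa> * ((g (fst z) * indicator {0..t} (fst z)) * (g (snd z) * indicator {0..t} (snd z)))
                  * \<bar>fst z - snd z\<bar> powr \<alpha>)"
  have k0: "\<kappa> > 0" unfolding \<kappa>_def using H by simp
  have a1: "-1 < \<alpha>" "\<alpha> \<le> 0" unfolding \<alpha>_def using H by auto
  have [measurable]: "g \<in> borel_measurable borel" by (rule gm)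
  have eqJ: "(\<lambda>z. indicator S z *\<^sub>R G z) = J"
  proof
    fix z :: "real \<times> real"
    obtain u v where z: "z = (u, v)" by (cases z)
    show "indicator S z *\<^sub>R G z = J z"
      by (cases "u \<in> {0..t}"; cases "v \<in> {0..t}")
         (simp_all add: z S_def G_def J_def fg fbm_kernel_def \<kappa>_def \<alpha>_def indicator_def power2_eq_square ac_simps)
  qed
  have Jm: "J \<in> borel_measurable lborel"
    unfolding lborel_prod[symmetric] J_def by measurable
  have absJ: "\<And>z. ennreal (\<bar>J z\<bar>) = ennreal (a\<^sup>2 * \<kappa>) * ennreal (F (fst z) * F (snd z) * \<bar>fst z - snd z\<bar> powr \<alpha>)"
    unfolding J_def F_def using k0
    by (subst ennreal_mult[symmetric]) (auto simp: abs_mult indicator_def ac_simps)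
  have Fm: "F \<in> borel_measurable borel" unfolding F_def by measurable
  have FI: "(\<integral>\<^sup>+x. F x \<partial>lborel) \<le> ennreal (2 * m)" unfolding F_def using gi .
  have main: "(\<integral>\<^sup>+u. \<integral>\<^sup>+v. ennreal (F u * F v * \<bar>u - v\<bar> powr \<alpha>) \<partial>lborel \<partial>lborel) \<le> ennreal C"
    unfolding C_def
    by (rule L_main[OF a1 Fm _ _ m _ FI]) (auto simp: F_def indicator_def g1)
  have "(\<integral>\<^sup>+z. ennreal (\<bar>J z\<bar>) \<partial>lborel) = (\<integral>\<^sup>+z. ennreal (a\<^sup>2 * \<kappa>) * ennreal (F (fst z) * F (snd z) * \<bar>fst z - snd z\<bar> powr \<alpha>) \<partial>(lborel \<Otimes>\<^sub>M lborel))"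
    unfolding absJ lborel_prod ..
  also have "\<dots> = ennreal (a\<^sup>2 * \<kappa>) * (\<integral>\<^sup>+z. ennreal (F (fst z) * F (snd z) * \<bar>fst z - snd z\<bar> powr \<alpha>) \<partial>(lborel \<Otimes>\<^sub>M lborel))"
    by (rule nn_integral_cmult) (use Fm in measurable)
  also have "(\<integral>\<^sup>+z. ennreal (F (fst z) * F (snd z) * \<bar>fst z - snd z\<bar> powr \<alpha>) \<partial>(lborel \<Otimes>\<^sub>M lborel))
      = (\<integral>\<^sup>+u. \<integral>\<^sup>+v. ennreal (F u * F v * \<bar>u - v\<bar> powr \<alpha>) \<partial>lborel \<partial>lborel)"
  proof -
    have [measurable]: "F \<in> borel_measurable borel" by (rule Fm)
    have "(\<lambda>z. ennreal (F (fst z) * F (snd z) * \<bar>fst z - snd z\<bar> powr \<alpha>)) \<in> borel_measurable (lborel \<Otimes>\<^sub>M lborel)"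
      by measurable
    from lborel.nn_integral_fst[OF this] show ?thesis by simp
  qed
  finally have nnJ: "(\<integral>\<^sup>+z. ennreal (\<bar>J z\<bar>) \<partial>lborel) \<le> ennreal (a\<^sup>2 * \<kappa>) * ennreal C"
    using main by (simp add: mult_left_mono)
  have C0: "0 \<le> C" unfolding C_def using a1 by auto
  have nnJ': "(\<integral>\<^sup>+z. ennreal (\<bar>J z\<bar>) \<partial>lborel) \<le> ennreal (a\<^sup>2 * \<kappa> * C)"
    using nnJ k0 C0 by (simp add: ennreal_mult)
  have "integrable lborel J"
    unfolding integrable_iff_bounded using Jm nnJ' by (auto simp: top_unique ennreal_less_top intro: le_less_trans)
  then show "wiener_integrable H f 0 t"
    unfolding wiener_integrable_def set_integrable_def S_def[symmetric] G_def[symmetric] eqJ .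
  have "wiener_moment2 H f 0 t = integral\<^sup>L lborel J"
    unfolding wiener_moment2_def set_lebesgue_integral_def S_def[symmetric] G_def[symmetric] eqJ ..
  also have "\<dots> \<le> a\<^sup>2 * \<kappa> * C"
  proof (rule integral_real_bounded)
    show "0 \<le> a\<^sup>2 * \<kappa> * C" using k0 C0 by simp
    have "(\<integral>\<^sup>+z. ennreal (J z) \<partial>lborel) \<le> (\<integral>\<^sup>+z. ennreal (\<bar>J z\<bar>) \<partial>lborel)"
      by (intro nn_integral_mono ennreal_leI) simp
    then show "(\<integral>\<^sup>+z. ennreal (J z) \<partial>lborel) \<le> ennreal (a\<^sup>2 * \<kappa> * C)" using nnJ' by simp
  qed
  also have "a\<^sup>2 * \<kappa> * C = a\<^sup>2 * (H * (2*H - 1)) * (4 / (2*H - 1) + 4) * m powr (2*H)"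
    unfolding C_def \<kappa>_def \<alpha>_def by simp
  finally show "wiener_moment2 H f 0 t \<le> a\<^sup>2 * (H * (2*H - 1)) * (4 / (2*H - 1) + 4) * m powr (2*H)" .
qed



lemma exp_int:
  assumes c: "c > 0"
  shows "(\<integral>\<^sup>+r. ennreal (exp (- ((b - r) * c))) * indicator {a..b} r \<partial>lborel) \<le> ennreal (1/c)"
proof (cases "a \<le> b")
  case True
  have d: "((\<lambda>r. exp (- ((b - r) * c)) / c) has_vector_derivative exp (- ((b - r) * c))) (at r within {a..b})" for r
  proof -
    have "((\<lambda>r. exp (- ((b - r) * c)) / c) has_real_derivative exp (- ((b - r) * c))) (at r within {a..b})"
      using c by (auto intro!: derivative_eq_intros)
    then show ?thesis by (simp add: has_real_derivative_iff_has_vector_derivative)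
  qed
  have "((\<lambda>r. exp (- ((b - r) * c))) has_integral (exp (- ((b - b) * c)) / c - exp (- ((b - a) * c)) / c)) {a..b}"
    by (rule fundamental_theorem_of_calculus[OF True d])
  then have "(\<integral>\<^sup>+r. ennreal (exp (- ((b - r) * c))) * indicator {a..b} r \<partial>lborel)
      = ennreal (exp (- ((b - b) * c)) / c - exp (- ((b - a) * c)) / c)"
    by (rule nn_integral_has_integral_lebesgue'[rotated]) simp
  also have "\<dots> \<le> ennreal (1/c)" using c by (intro ennreal_leI) simp
  finally show ?thesis .
qed simp

lemma powr_key:
  fixes l h p \<gamma> :: real
  assumes "l > 0" "h > 0" "0 \<le> \<gamma>" "\<gamma> \<le> p"
  shows "l powr \<gamma> * (min h (1/l)) powr p \<le> h powr (p - \<gamma>)"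
proof -
  define m where "m = min h (1/l)"
  have m0: "m > 0" "m \<le> h" "l * m \<le> 1" using assms unfolding m_def by (auto simp: min_def field_simps)
  have "m powr p = m powr \<gamma> * m powr (p - \<gamma>)" using m0 by (simp add: powr_add[symmetric])
  then have "l powr \<gamma> * m powr p = (l * m) powr \<gamma> * m powr (p - \<gamma>)"
    using assms m0 by (simp add: powr_mult)
  also have "\<dots> \<le> 1 * h powr (p - \<gamma>)"
  proof (rule mult_mono)
    show "(l * m) powr \<gamma> \<le> 1" using m0 assms powr_mono2[of \<gamma> "l*m" 1] by simp
    show "m powr (p - \<gamma>) \<le> h powr (p - \<gamma>)" using m0 assms by (intro powr_mono2) auto
  qed auto
  finally show ?thesis unfolding m_def by simp
qed



lemma sgrp_inner:
  fixes e :: "nat \<Rightarrow> 'a::{real_inner,complete_space}"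
  assumes on: "orthonormal_basis e" and tau: "\<tau> \<ge> 0" and lp: "\<And>i. lam i > 0"
  shows "sgrp e lam \<tau> x \<bullet> e i = exp (- (\<tau> * lam i)) * (x \<bullet> e i)"
proof -
  have "summable (\<lambda>j. (exp (- (\<tau> * lam j)) * (x \<bullet> e j))\<^sup>2)"
    by (rule on_series_bounded[OF on, where B=1]) (use tau lp in \<open>auto intro!: mult_nonneg_nonneg less_imp_le[OF lp]\<close>)
  from on_series(2)[OF on this] show ?thesis unfolding sgrp_def .
qed

definition "KC H = H * (2*H - 1) * (4 / (2*H - 1) + 4)"

lemma cell_conv:
  fixes e :: "nat \<Rightarrow> 'a::{real_inner,complete_space}"
  assumes H: "1/2 < H" "H < 1" and on: "orthonormal_basis e" and lp: "\<And>i. lam i > 0" and t: "t \<ge> 0"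
  shows "wiener_integrable H (\<lambda>r. conv_integrand e lam \<Phi> t r (e n) \<bullet> e i) 0 t"
    and "wiener_moment2 H (\<lambda>r. conv_integrand e lam \<Phi> t r (e n) \<bullet> e i) 0 t
           \<le> (\<Phi> (e n) \<bullet> e i)\<^sup>2 * KC H * (1 / lam i) powr (2*H)"
proof -
  define g where "g = (\<lambda>r. exp (- ((t - r) * lam i)))"
  have fg: "\<And>r. r \<in> {0..t} \<Longrightarrow> conv_integrand e lam \<Phi> t r (e n) \<bullet> e i = (\<Phi> (e n) \<bullet> e i) * g r"
    unfolding conv_integrand_def g_def by (subst sgrp_inner[OF on _ lp]) auto
  have gm: "g \<in> borel_measurable borel" unfolding g_def by measurable
  have g1: "\<And>r. r \<in> {0..t} \<Longrightarrow> \<bar>g r\<bar> \<le> 1" unfolding g_def using lp[of i] by auto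
  have m: "1 / lam i > 0" using lp[of i] by simp
  have "(\<integral>\<^sup>+r. ennreal (\<bar>g r\<bar> * indicator {0..t} r) \<partial>lborel) = (\<integral>\<^sup>+r. ennreal (exp (- ((t - r) * lam i))) * indicator {0..t} r \<partial>lborel)"
    unfolding g_def by (intro nn_integral_cong) (auto simp: indicator_def)
  also have "\<dots> \<le> ennreal (1 / lam i)" by (rule exp_int[OF lp])
  also have "\<dots> \<le> ennreal (2 * (1 / lam i))" using lp[of i] by (intro ennreal_leI) (simp add: divide_le_cancel)
  finally have gi: "(\<integral>\<^sup>+r. ennreal (\<bar>g r\<bar> * indicator {0..t} r) \<partial>lborel) \<le> ennreal (2 * (1 / lam i))" .
  note W = WM[OF H fg gm g1 m gi]
  show "wiener_integrable H (\<lambda>r. conv_integrand e lam \<Phi> t r (e n) \<bullet> e i) 0 t" by (rule W(1))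
  show "wiener_moment2 H (\<lambda>r. conv_integrand e lam \<Phi> t r (e n) \<bullet> e i) 0 t
           \<le> (\<Phi> (e n) \<bullet> e i)\<^sup>2 * KC H * (1 / lam i) powr (2*H)"
    using W(2) unfolding KC_def by (simp add: ac_simps)
qed

lemma cell_diff:
  fixes e :: "nat \<Rightarrow> 'a::{real_inner,complete_space}"
  assumes H: "1/2 < H" "H < 1" and on: "orthonormal_basis e" and lp: "\<And>i. lam i > 0"
    and st: "0 \<le> s" "s < t"
  shows "wiener_moment2 H (\<lambda>r. conv_diff_integrand e lam \<Phi> s t r (e n) \<bullet> e i) 0 t
           \<le> (\<Phi> (e n) \<bullet> e i)\<^sup>2 * KC H * (min (t - s) (1 / lam i)) powr (2*H)"
proof -
  define l where "l = lam i"
  have l: "l > 0" unfolding l_def by (rule lp)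
  define h where "h = t - s"
  have h: "h > 0" using st unfolding h_def by simp
  define m where "m = min h (1 / l)"
  define E where "E = exp (- (h * l))"
  define g where "g = (\<lambda>r. exp (- ((t - r) * l)) - (if r \<le> s then exp (- ((s - r) * l)) else 0))"
  have fg: "\<And>r. r \<in> {0..t} \<Longrightarrow> conv_diff_integrand e lam \<Phi> s t r (e n) \<bullet> e i = (\<Phi> (e n) \<bullet> e i) * g r"
    unfolding conv_diff_integrand_def g_def l_def
    by (auto simp: inner_diff_left sgrp_inner[OF on _ lp] algebra_simps)
  have gm: "g \<in> borel_measurable borel" unfolding g_def by measurable
  have split: "exp (- ((t - r) * l)) = exp (- ((s - r) * l)) * E" for r
    unfolding E_def h_def by (simp add: exp_add[symmetric] algebra_simps)
  have E: "0 < E" "E \<le> 1" unfolding E_def using h l by auto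
  have g1: "\<And>r. r \<in> {0..t} \<Longrightarrow> \<bar>g r\<bar> \<le> 1"
  proof -
    fix r assume r: "r \<in> {0..t}"
    show "\<bar>g r\<bar> \<le> 1"
    proof (cases "r \<le> s")
      case True
      have X1: "exp (- ((s - r) * l)) \<le> 1" using True l by auto
      have X2: "exp (- ((s - r) * l)) * E \<le> exp (- ((s - r) * l))" using E by (simp add: mult_left_le)
      have X3: "0 \<le> exp (- ((s - r) * l)) * E" using E by simp
      have "g r = exp (- ((s - r) * l)) * E - exp (- ((s - r) * l))" unfolding g_def split using True by simp
      then show ?thesis using X1 X2 X3 by linarith

    next
      case False
      then show ?thesis using r l unfolding g_def by auto
    qed
  qed
  have m: "m > 0" unfolding m_def using h l by simp
  define R where "R = (\<lambda>r. (1 - E) * (exp (- ((s - r) * l)) * indicator {0..s} r) + exp (- ((t - r) * l)) * indicator {s..t} r)"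
  have pw: "\<bar>g r\<bar> * indicator {0..t} r \<le> R r" for r
  proof (cases "r \<in> {0..t}")
    case True
    show ?thesis
    proof (cases "r \<le> s")
      case rs: True
      have "\<bar>g r\<bar> = (1 - E) * exp (- ((s - r) * l))"
        using rs E unfolding g_def split by (auto simp: abs_if algebra_simps mult_le_cancel_left1)
      then show ?thesis using True rs unfolding R_def by (auto simp: indicator_def)
    next
      case False
      then show ?thesis using True unfolding R_def g_def by (auto simp: indicator_def)
    qed
  next
    case False
    then show ?thesis unfolding R_def using E by (auto simp: indicator_def)
  qed
  have lin: "1 - E \<le> h * l" unfolding E_def using exp_ge_add_one_self[of "- (h * l)"] by simp
  have iA: "(\<integral>\<^sup>+r. ennreal ((1 - E) * (exp (- ((s - r) * l)) * indicator {0..s} r)) \<partial>lborel) \<le> ennreal m"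
  proof -
    have "(\<integral>\<^sup>+r. ennreal ((1 - E) * (exp (- ((s - r) * l)) * indicator {0..s} r)) \<partial>lborel)
        = (\<integral>\<^sup>+r. ennreal (1 - E) * (ennreal (exp (- ((s - r) * l))) * indicator {0..s} r) \<partial>lborel)"
      using E by (intro nn_integral_cong) (auto simp: indicator_def ennreal_mult)
    also have "\<dots> = ennreal (1 - E) * (\<integral>\<^sup>+r. ennreal (exp (- ((s - r) * l))) * indicator {0..s} r \<partial>lborel)"
      by (rule nn_integral_cmult) measurable
    also have "\<dots> \<le> ennreal (1 - E) * ennreal (1 / l)"
      by (intro mult_left_mono exp_int l) simp
    also have "\<dots> = ennreal ((1 - E) / l)" using E l by (simp add: ennreal_mult[symmetric])
    also have "\<dots> \<le> ennreal m"
    proof (intro ennreal_leI)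
      have "(1 - E) / l \<le> h" using lin l by (simp add: field_simps)
      moreover have "(1 - E) / l \<le> 1 / l" using E l by (simp add: divide_right_mono)
      ultimately show "(1 - E) / l \<le> m" unfolding m_def by simp
    qed
    finally show ?thesis .
  qed
  have iB: "(\<integral>\<^sup>+r. ennreal (exp (- ((t - r) * l)) * indicator {s..t} r) \<partial>lborel) \<le> ennreal m"
  proof -
    have eq: "(\<integral>\<^sup>+r. ennreal (exp (- ((t - r) * l)) * indicator {s..t} r) \<partial>lborel)
        = (\<integral>\<^sup>+r. ennreal (exp (- ((t - r) * l))) * indicator {s..t} r \<partial>lborel)"
      by (intro nn_integral_cong) (auto simp: indicator_def)
    have b1: "(\<integral>\<^sup>+r. ennreal (exp (- ((t - r) * l)) * indicator {s..t} r) \<partial>lborel) \<le> ennreal (1 / l)"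
      unfolding eq by (rule exp_int[OF l])
    have "(\<integral>\<^sup>+r. ennreal (exp (- ((t - r) * l)) * indicator {s..t} r) \<partial>lborel) \<le> (\<integral>\<^sup>+r. indicator {s..t} r \<partial>lborel)"
      using l st by (intro nn_integral_mono) (auto simp: indicator_def)
    also have "\<dots> = ennreal h" using st unfolding h_def by simp
    finally have b2: "(\<integral>\<^sup>+r. ennreal (exp (- ((t - r) * l)) * indicator {s..t} r) \<partial>lborel) \<le> ennreal h" .
    show ?thesis unfolding m_def using b1 b2 by (cases "h \<le> 1 / l") (auto simp: min_def)
  qed
  have "(\<integral>\<^sup>+r. ennreal (\<bar>g r\<bar> * indicator {0..t} r) \<partial>lborel) \<le> (\<integral>\<^sup>+r. ennreal (R r) \<partial>lborel)"
    by (intro nn_integral_mono ennreal_leI pw)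
  also have "\<dots> = (\<integral>\<^sup>+r. ennreal ((1 - E) * (exp (- ((s - r) * l)) * indicator {0..s} r))
                     + ennreal (exp (- ((t - r) * l)) * indicator {s..t} r) \<partial>lborel)"
    unfolding R_def using E by (intro nn_integral_cong) (auto simp: ennreal_plus)
  also have "\<dots> = (\<integral>\<^sup>+r. ennreal ((1 - E) * (exp (- ((s - r) * l)) * indicator {0..s} r)) \<partial>lborel)
                  + (\<integral>\<^sup>+r. ennreal (exp (- ((t - r) * l)) * indicator {s..t} r) \<partial>lborel)"
    by (rule nn_integral_add) measurable
  also have "\<dots> \<le> ennreal m + ennreal m" by (intro add_mono iA iB)
  also have "\<dots> = ennreal (2 * m)" using m by (simp add: ennreal_plus[symmetric])
  finally have gi: "(\<integral>\<^sup>+r. ennreal (\<bar>g r\<bar> * indicator {0..t} r) \<partial>lborel) \<le> ennreal (2 * m)" .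
  note W = WM[OF H fg gm g1 m gi]
  show ?thesis using W(2) unfolding KC_def m_def h_def l_def by (simp add: ac_simps)
qed



lemma sum_bound:
  fixes T w :: "nat \<Rightarrow> nat \<Rightarrow> real"
  assumes "\<And>n i. T n i \<le> c' * w n i" "c' \<ge> 0" "\<And>n i. 0 \<le> w n i" "\<And>n. summable (w n)"
  shows "(\<Sum>n. \<Sum>i. ennreal (T n i)) \<le> ennreal c' * (\<Sum>n. ennreal (\<Sum>i. w n i))"
proof -
  have "(\<Sum>n. \<Sum>i. ennreal (T n i)) \<le> (\<Sum>n. \<Sum>i. ennreal c' * ennreal (w n i))"
    using assms by (intro suminf_le summableI) (auto simp: ennreal_mult[symmetric] intro!: ennreal_leI)
  also have "\<dots> = (\<Sum>n. ennreal c' * ennreal (\<Sum>i. w n i))"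
    using assms by (simp add: suminf_ennreal2)
  also have "\<dots> = ennreal c' * (\<Sum>n. ennreal (\<Sum>i. w n i))" by simp
  finally show ?thesis .
qed

lemma hs_eq:
  fixes e :: "nat \<Rightarrow> 'a::{real_inner,complete_space}"
  assumes on: "orthonormal_basis e" and lp: "\<And>i. lam i > 0" and mo: "\<And>i. lam 0 \<le> lam i" and b: "\<beta> \<le> 1"
  shows "hs_norm2 e (frac_pow e lam ((\<beta> - 1) / 2) \<circ> \<Phi>) = (\<Sum>n. ennreal (\<Sum>i. lam i powr (\<beta> - 1) * (\<Phi> (e n) \<bullet> e i)\<^sup>2))"
    and "summable (\<lambda>i. lam i powr (\<beta> - 1) * (\<Phi> (e n) \<bullet> e i)\<^sup>2)"
proof -
  have sq: "(lam i powr ((\<beta> - 1) / 2) * y)\<^sup>2 = lam i powr (\<beta> - 1) * y\<^sup>2" for i y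
  proof -
    have "(lam i powr ((\<beta> - 1) / 2))\<^sup>2 = lam i powr ((\<beta> - 1) / 2 + (\<beta> - 1) / 2)"
      by (simp add: power2_eq_square powr_add[symmetric])
    then show ?thesis by (simp add: power_mult_distrib)
  qed
  have sm: "summable (\<lambda>i. (lam i powr ((\<beta> - 1) / 2) * (x \<bullet> e i))\<^sup>2)" for x
  proof (rule on_series_bounded[OF on, where B="lam 0 powr ((\<beta> - 1) / 2)"])
    fix i show "\<bar>lam i powr ((\<beta> - 1) / 2)\<bar> \<le> lam 0 powr ((\<beta> - 1) / 2)"
      using lp[of 0] mo[of i] b by (simp add: powr_mono2')
  qed
  have nrm: "(norm (frac_pow e lam ((\<beta> - 1) / 2) x))\<^sup>2 = (\<Sum>i. lam i powr (\<beta> - 1) * (x \<bullet> e i)\<^sup>2)" for x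
    using on_series(3)[OF on sm[of x]] unfolding frac_pow_def sq .
  show "hs_norm2 e (frac_pow e lam ((\<beta> - 1) / 2) \<circ> \<Phi>) = (\<Sum>n. ennreal (\<Sum>i. lam i powr (\<beta> - 1) * (\<Phi> (e n) \<bullet> e i)\<^sup>2))"
    unfolding hs_norm2_def by (simp add: nrm)
  show "summable (\<lambda>i. lam i powr (\<beta> - 1) * (\<Phi> (e n) \<bullet> e i)\<^sup>2)"
    using sm[of "\<Phi> (e n)"] unfolding sq .
qed

lemma pw1:
  fixes l l0 H \<beta> :: real
  assumes "0 < l0" "l0 \<le> l" "0 < 2*H + \<beta> - 1"
  shows "(1 / l) powr (2*H) \<le> l0 powr (- (2*H + \<beta> - 1)) * l powr (\<beta> - 1)"
proof -
  have l: "l > 0" using assms by simp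
  have "(1 / l) powr (2*H) = l powr (- (2*H + \<beta> - 1)) * l powr (\<beta> - 1)"
    using l by (simp add: powr_divide powr_minus_divide[symmetric] powr_add[symmetric])
  also have "\<dots> \<le> l0 powr (- (2*H + \<beta> - 1)) * l powr (\<beta> - 1)"
    using assms by (intro mult_right_mono powr_mono2') auto
  finally show ?thesis .
qed

lemma pw2:
  fixes l H \<beta> :: real
  assumes "0 < l"
  shows "l powr (2*H + \<beta> - 1) * (1 / l) powr (2*H) = l powr (\<beta> - 1)"
  using assms by (simp add: powr_divide powr_diff[symmetric])

lemma pw3:
  fixes l h H \<beta> \<delta> :: real
  assumes "0 < l" "0 < h" "\<beta> \<le> 1" "0 \<le> \<delta>" "\<delta> \<le> 2*H + \<beta> - 1"
  shows "l powr \<delta> * (min h (1/l)) powr (2*H) \<le> h powr (2*H + \<beta> - 1 - \<delta>) * l powr (\<beta> - 1)"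
proof -
  define \<gamma> where "\<gamma> = \<delta> + 1 - \<beta>"
  have k: "l powr \<gamma> * (min h (1/l)) powr (2*H) \<le> h powr (2*H - \<gamma>)"
    using assms unfolding \<gamma>_def by (intro powr_key) auto
  have "l powr \<delta> = l powr (\<beta> - 1) * l powr \<gamma>" unfolding \<gamma>_def by (simp add: powr_add[symmetric])
  then have "l powr \<delta> * (min h (1/l)) powr (2*H) = l powr (\<beta> - 1) * (l powr \<gamma> * (min h (1/l)) powr (2*H))"
    by simp
  also have "\<dots> \<le> l powr (\<beta> - 1) * h powr (2*H - \<gamma>)" by (intro mult_left_mono k) simp
  also have "2*H - \<gamma> = 2*H + \<beta> - 1 - \<delta>" unfolding \<gamma>_def by simp
  finally show ?thesis by (simp add: mult.commute)
qed



theorem mainTheorem3: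
  fixes H :: real
  assumes "1/2 < H" and "H < 1"
  shows "\<exists>c>0. \<forall>(e :: nat \<Rightarrow> 'a::{real_inner, complete_space}) lam \<Phi> \<beta> T.
     orthonormal_basis e \<and> admissible_spectrum lam \<and> linear \<Phi> \<and>
     1 - 2 * H < \<beta> \<and> \<beta> \<le> 1 \<and> 0 < T \<and>
     hs_norm2 e (frac_pow e lam ((\<beta> - 1) / 2) \<circ> \<Phi>) < \<infinity>
     \<longrightarrow>
       (\<forall>t\<in>{0..T}. stoch_well_defined H e lam (conv_integrand e lam \<Phi> t) 0 t) \<and>
       (\<forall>t\<in>{0..T}. stoch_moment2 H e lam (2 * H + \<beta> - 1) (conv_integrand e lam \<Phi> t) 0 t
            \<le> ennreal (c\<^sup>2) * hs_norm2 e (frac_pow e lam ((\<beta> - 1) / 2) \<circ> \<Phi>)) \<and>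
       (\<forall>s t \<delta>. 0 \<le> s \<and> s < t \<and> t \<le> T \<and> 0 \<le> \<delta> \<and> \<delta> \<le> 2 * H + \<beta> - 1 \<longrightarrow>
          stoch_moment2 H e lam \<delta> (conv_diff_integrand e lam \<Phi> s t) 0 t
            \<le> ennreal (c\<^sup>2 * (t - s) powr (2 * H + \<beta> - 1 - \<delta>))
               * hs_norm2 e (frac_pow e lam ((\<beta> - 1) / 2) \<circ> \<Phi>))"
proof -
  note H = assms
  have KC0: "KC H > 0" unfolding KC_def using H by (intro mult_pos_pos add_pos_pos divide_pos_pos) auto
  define c where "c = sqrt (KC H)"
  have c0: "c > 0" and c2: "c\<^sup>2 = KC H" unfolding c_def using KC0 by auto
  show ?thesis
  proof (intro exI[of _ c] conjI c0 allI impI)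
    fix e :: "nat \<Rightarrow> 'a" and lam :: "nat \<Rightarrow> real" and \<Phi> :: "'a \<Rightarrow> 'a" and \<beta> T :: real
    assume A: "orthonormal_basis e \<and> admissible_spectrum lam \<and> linear \<Phi> \<and>
     1 - 2 * H < \<beta> \<and> \<beta> \<le> 1 \<and> 0 < T \<and> hs_norm2 e (frac_pow e lam ((\<beta> - 1) / 2) \<circ> \<Phi>) < \<infinity>"
    then have on: "orthonormal_basis e" and b1: "1 - 2 * H < \<beta>" and b2: "\<beta> \<le> 1"
      and hsf: "hs_norm2 e (frac_pow e lam ((\<beta> - 1) / 2) \<circ> \<Phi>) < \<infinity>" and adm: "admissible_spectrum lam"
      by auto
    have l00: "lam 0 > 0" and mo: "\<And>i. lam 0 \<le> lam i"
      using adm unfolding admissible_spectrum_def mono_def by auto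
    have lp: "\<And>i. lam i > 0" using l00 mo by (meson less_le_trans)
    define w where "w = (\<lambda>n i. lam i powr (\<beta> - 1) * (\<Phi> (e n) \<bullet> e i)\<^sup>2)"
    have w0: "\<And>n i. 0 \<le> w n i" unfolding w_def by simp
    have wsum: "\<And>n. summable (w n)" unfolding w_def by (rule hs_eq(2)[where lam=lam, OF on lp mo b2])
    have hs: "hs_norm2 e (frac_pow e lam ((\<beta> - 1) / 2) \<circ> \<Phi>) = (\<Sum>n. ennreal (\<Sum>i. w n i))"
      unfolding w_def by (rule hs_eq(1)[where lam=lam, OF on lp mo b2])
    have pos: "0 < 2*H + \<beta> - 1" using b1 by simp
    show "\<forall>t\<in>{0..T}. stoch_well_defined H e lam (conv_integrand e lam \<Phi> t) 0 t"
    proof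
      fix t assume t: "t \<in> {0..T}"
      have "stoch_moment2 H e lam 0 (conv_integrand e lam \<Phi> t) 0 t
          \<le> ennreal (KC H * lam 0 powr (- (2*H + \<beta> - 1))) * (\<Sum>n. ennreal (\<Sum>i. w n i))"
        unfolding stoch_moment2_def
      proof (rule sum_bound[OF _ _ w0 wsum])
        fix n i
        have "lam i powr 0 * wiener_moment2 H (\<lambda>r. conv_integrand e lam \<Phi> t r (e n) \<bullet> e i) 0 t
            \<le> (\<Phi> (e n) \<bullet> e i)\<^sup>2 * KC H * (1 / lam i) powr (2*H)"
          using cell_conv(2)[OF H on lp, where t=t and \<Phi>=\<Phi> and n=n and i=i] t lp[of i] by simp
        also have "\<dots> \<le> (\<Phi> (e n) \<bullet> e i)\<^sup>2 * KC H * (lam 0 powr (- (2*H + \<beta> - 1)) * lam i powr (\<beta> - 1))"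
          using KC0 by (intro mult_left_mono pw1 l00 mo pos) auto
        finally show "lam i powr 0 * wiener_moment2 H (\<lambda>r. conv_integrand e lam \<Phi> t r (e n) \<bullet> e i) 0 t
            \<le> KC H * lam 0 powr (- (2*H + \<beta> - 1)) * w n i"
          unfolding w_def by (simp add: ac_simps)
      qed (use KC0 in simp)
      also have "\<dots> < \<infinity>" using hsf unfolding hs by (simp add: ennreal_mult_less_top)
      finally have fin: "stoch_moment2 H e lam 0 (conv_integrand e lam \<Phi> t) 0 t < \<infinity>" .
      show "stoch_well_defined H e lam (conv_integrand e lam \<Phi> t) 0 t"
        unfolding stoch_well_defined_def using fin cell_conv(1)[OF H on lp] t by auto
    qed
    show "\<forall>t\<in>{0..T}. stoch_moment2 H e lam (2 * H + \<beta> - 1) (conv_integrand e lam \<Phi> t) 0 t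
            \<le> ennreal (c\<^sup>2) * hs_norm2 e (frac_pow e lam ((\<beta> - 1) / 2) \<circ> \<Phi>)"
    proof
      fix t assume t: "t \<in> {0..T}"
      show "stoch_moment2 H e lam (2 * H + \<beta> - 1) (conv_integrand e lam \<Phi> t) 0 t
            \<le> ennreal (c\<^sup>2) * hs_norm2 e (frac_pow e lam ((\<beta> - 1) / 2) \<circ> \<Phi>)"
        unfolding stoch_moment2_def hs
      proof (rule sum_bound[OF _ _ w0 wsum])
        fix n i
        have "lam i powr (2 * H + \<beta> - 1) * wiener_moment2 H (\<lambda>r. conv_integrand e lam \<Phi> t r (e n) \<bullet> e i) 0 t
            \<le> lam i powr (2 * H + \<beta> - 1) * ((\<Phi> (e n) \<bullet> e i)\<^sup>2 * KC H * (1 / lam i) powr (2*H))"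
          using cell_conv(2)[OF H on lp, where t=t and \<Phi>=\<Phi> and n=n and i=i] t by (intro mult_left_mono) auto
        also have "\<dots> = (\<Phi> (e n) \<bullet> e i)\<^sup>2 * KC H * (lam i powr (2 * H + \<beta> - 1) * (1 / lam i) powr (2*H))"
          by (simp add: ac_simps)
        also have "\<dots> = c\<^sup>2 * w n i" unfolding pw2[OF lp] w_def c2 by (simp add: ac_simps)
        finally show "lam i powr (2 * H + \<beta> - 1) * wiener_moment2 H (\<lambda>r. conv_integrand e lam \<Phi> t r (e n) \<bullet> e i) 0 t
            \<le> c\<^sup>2 * w n i" .
      qed simp
    qed
    fix s t \<delta> :: real
    assume st: "0 \<le> s \<and> s < t \<and> t \<le> T \<and> 0 \<le> \<delta> \<and> \<delta> \<le> 2 * H + \<beta> - 1"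
    show "stoch_moment2 H e lam \<delta> (conv_diff_integrand e lam \<Phi> s t) 0 t
            \<le> ennreal (c\<^sup>2 * (t - s) powr (2 * H + \<beta> - 1 - \<delta>))
               * hs_norm2 e (frac_pow e lam ((\<beta> - 1) / 2) \<circ> \<Phi>)"
      unfolding stoch_moment2_def hs
    proof (rule sum_bound[OF _ _ w0 wsum])
      fix n i
      have "lam i powr \<delta> * wiener_moment2 H (\<lambda>r. conv_diff_integrand e lam \<Phi> s t r (e n) \<bullet> e i) 0 t
          \<le> lam i powr \<delta> * ((\<Phi> (e n) \<bullet> e i)\<^sup>2 * KC H * (min (t - s) (1 / lam i)) powr (2*H))"
        using cell_diff[OF H on lp, where s=s and t=t and \<Phi>=\<Phi> and n=n and i=i] st by (intro mult_left_mono) auto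
      also have "\<dots> = (\<Phi> (e n) \<bullet> e i)\<^sup>2 * KC H * (lam i powr \<delta> * (min (t - s) (1 / lam i)) powr (2*H))"
        by (simp add: ac_simps)
      also have "\<dots> \<le> (\<Phi> (e n) \<bullet> e i)\<^sup>2 * KC H * ((t - s) powr (2*H + \<beta> - 1 - \<delta>) * lam i powr (\<beta> - 1))"
        using KC0 st b2 by (intro mult_left_mono pw3 lp) auto
      also have "\<dots> = c\<^sup>2 * (t - s) powr (2 * H + \<beta> - 1 - \<delta>) * w n i"
        unfolding w_def c2 by (simp add: ac_simps)
      finally show "lam i powr \<delta> * wiener_moment2 H (\<lambda>r. conv_diff_integrand e lam \<Phi> s t r (e n) \<bullet> e i) 0 t
          \<le> c\<^sup>2 * (t - s) powr (2 * H + \<beta> - 1 - \<delta>) * w n i" .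
    qed simp
  qed
qed

end
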